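(* In the monoid $M_n^+$ (defined in the context), with $\delta\equiv a_{n(n-1)}a_{(n-1)(n-2)}\cdots a_{21}$, the following positive equalities hold: $$a_{ts}\delta\doteq\delta a_{(t+1)(s+1)}\ \text{ and }\ b_{ts}\delta\doteq\delta b_{(t+1)(s+1)}\quad\text{for } 1\le s<t<n,$$ $$a_{ns}\delta\doteq\delta a_{(s+1)1}\ \text{ and }\ b_{ns}\delta\doteq\delta b_{(s+1)1}\quad\text{for } 1\le s<n.$$
   Context: Fix $n\ge 2$. Let $M_n^+$ be the monoid with generators $a_{ts}$ and $b_{ts}$ for $1\le s<t\le n$ and relations: $a_{ts}a_{rq}=a_{rq}a_{ts}$, $a_{ts}b_{rq}=b_{rq}a_{ts}$ and $b_{ts}b_{rq}=b_{rq}b_{ts}$ whenever $(t-r)(t-q)(s-r)(s-q)>0$; $a_{ts}a_{sr}=a_{tr}a_{ts}=a_{sr}a_{tr}$ for $1\le r<s<t\le n$; $a_{ts}b_{ts}=b_{ts}a_{ts}$ for $1\le s<t\le n$; $a_{ts}b_{sr}=b_{tr}a_{ts}$, $a_{sr}b_{tr}=b_{ts}a_{sr}$ and $a_{tr}b_{ts}=b_{sr}a_{tr}$ for $1\le r<s<t\le n$. (This is the positive singular braid monoid in Birman–Ko–Lee type generators.) For words $A,B$ in these generators, $A\doteq B$ means they represent the same element of $M_n^+$. *)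

theory Defs
  imports Main
begin

text \<open>Generators a_{ts} (A t s) and b_{ts} (B t s) of the positive singular braid
monoid M_n^+ in Birman-Ko-Lee type generators; valid when 1 \<le> s < t \<le> n.\<close>

datatype gen = A nat nat | B nat nat

type_synonym word = "gen list"

definition valid_idx :: "nat \<Rightarrow> nat \<Rightarrow> nat \<Rightarrow> bool" where
  "valid_idx n t s \<longleftrightarrow> 1 \<le> s \<and> s < t \<and> t \<le> n"

definition disjoint_cond :: "nat \<Rightarrow> nat \<Rightarrow> nat \<Rightarrow> nat \<Rightarrow> bool" where
  "disjoint_cond t s r q \<longleftrightarrow>
     (int t - int r) * (int t - int q) * (int s - int r) * (int s - int q) > 0"

inductive defrel :: "nat \<Rightarrow> word \<Rightarrow> word \<Rightarrow> bool" for n where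
  comm_aa: "\<lbrakk>valid_idx n t s; valid_idx n r q; disjoint_cond t s r q\<rbrakk>
      \<Longrightarrow> defrel n [A t s, A r q] [A r q, A t s]"
| comm_ab: "\<lbrakk>valid_idx n t s; valid_idx n r q; disjoint_cond t s r q\<rbrakk>
      \<Longrightarrow> defrel n [A t s, B r q] [B r q, A t s]"
| comm_bb: "\<lbrakk>valid_idx n t s; valid_idx n r q; disjoint_cond t s r q\<rbrakk>
      \<Longrightarrow> defrel n [B t s, B r q] [B r q, B t s]"
| tri1: "\<lbrakk>1 \<le> r; r < s; s < t; t \<le> n\<rbrakk>
      \<Longrightarrow> defrel n [A t s, A s r] [A t r, A t s]"
| tri2: "\<lbrakk>1 \<le> r; r < s; s < t; t \<le> n\<rbrakk>
      \<Longrightarrow> defrel n [A t r, A t s] [A s r, A t r]"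
| ab_same: "valid_idx n t s \<Longrightarrow> defrel n [A t s, B t s] [B t s, A t s]"
| mix1: "\<lbrakk>1 \<le> r; r < s; s < t; t \<le> n\<rbrakk>
      \<Longrightarrow> defrel n [A t s, B s r] [B t r, A t s]"
| mix2: "\<lbrakk>1 \<le> r; r < s; s < t; t \<le> n\<rbrakk>
      \<Longrightarrow> defrel n [A s r, B t r] [B t s, A s r]"
| mix3: "\<lbrakk>1 \<le> r; r < s; s < t; t \<le> n\<rbrakk>
      \<Longrightarrow> defrel n [A t r, B t s] [B s r, A t r]"

inductive peq :: "nat \<Rightarrow> word \<Rightarrow> word \<Rightarrow> bool" for n where
  base: "defrel n u v \<Longrightarrow> peq n u v"
| refl: "peq n u u"
| sym: "peq n u v \<Longrightarrow> peq n v u"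
| trans: "peq n u v \<Longrightarrow> peq n v w \<Longrightarrow> peq n u w"
| ctxt: "peq n u v \<Longrightarrow> peq n (x @ u @ y) (x @ v @ y)"

definition delta :: "nat \<Rightarrow> word" where
  "delta n = map (\<lambda>i. A (i + 1) i) (rev [1..<n])"

end

theory Submission
  imports Defs
begin

definition D :: "nat \<Rightarrow> nat \<Rightarrow> word" where
  "D k j = map (\<lambda>i. A (i + 1) i) (rev [j..<k])"

lemma D_same: "D j j = []" by (simp add: D_def)

lemma D_Suc: "j \<le> k \<Longrightarrow> D (Suc k) j = A (Suc k) k # D k j"
  by (simp add: D_def)

lemma D_split: "j \<le> m \<Longrightarrow> m \<le> k \<Longrightarrow> D k j = D k m @ D m j"
proof -
  assume a: "j \<le> m" "m \<le> k"
  have "[j..<k] = [j..<m] @ [m..<k]"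
    using a upt_add_eq_append[of j m "k - m"] by simp
  thus ?thesis by (simp add: D_def)
qed

lemma D_low: "j < k \<Longrightarrow> D k j = D k (Suc j) @ [A (Suc j) j]"
  using D_split[of j "Suc j" k] by (simp add: D_def)

lemma delta_D: "delta n = D n 1" by (simp add: delta_def D_def)

lemmas [trans] = peq.trans

lemma peq_c: "peq n u v \<Longrightarrow> peq n (x @ u @ y) (x @ v @ y)" by (rule peq.ctxt)

lemma disj1: "s < (t::nat) \<Longrightarrow> q < r \<Longrightarrow> r < s \<Longrightarrow> disjoint_cond t s r q"
  unfolding disjoint_cond_def
  by (intro mult_pos_pos) auto

lemma disj2: "s < (t::nat) \<Longrightarrow> q < r \<Longrightarrow> t < q \<Longrightarrow> disjoint_cond t s r q"
proof -
  assume a: "s < t" "q < r" "t < q"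
  have "(int t - int r) * (int t - int q) > 0" using a by (intro mult_neg_neg) auto
  moreover have "(int s - int r) * (int s - int q) > 0" using a by (intro mult_neg_neg) auto
  ultimately show ?thesis unfolding disjoint_cond_def
    by (metis mult.assoc mult_pos_pos)
qed

lemma comm: "X = A \<or> X = B \<Longrightarrow> valid_idx n t s \<Longrightarrow> valid_idx n r q \<Longrightarrow>
   disjoint_cond t s r q \<Longrightarrow> disjoint_cond r q t s \<Longrightarrow> peq n [X t s, A r q] [A r q, X t s]"
  by (auto intro: peq.base peq.sym defrel.intros)

lemma R1: "X = A \<or> X = B \<Longrightarrow> 1 \<le> R \<Longrightarrow> R < S \<Longrightarrow> S < T \<Longrightarrow> T \<le> n \<Longrightarrow>
   peq n [X T S, A S R] [A S R, X T R]"
proof -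
  assume h: "X = A \<or> X = B" "1 \<le> R" "R < S" "S < T" "T \<le> n"
  have a1: "peq n [A T S, A S R] [A T R, A T S]" by (rule peq.base, rule defrel.tri1) (use h in auto)
  have a2: "peq n [A T R, A T S] [A S R, A T R]" by (rule peq.base, rule defrel.tri2) (use h in auto)
  have b: "peq n [A S R, B T R] [B T S, A S R]" by (rule peq.base, rule defrel.mix2) (use h in auto)
  show ?thesis using h a1 a2 b peq.trans peq.sym by blast
qed

lemma R2: "X = A \<or> X = B \<Longrightarrow> 1 \<le> R \<Longrightarrow> R < S \<Longrightarrow> S < T \<Longrightarrow> T \<le> n \<Longrightarrow>
   peq n [X S R, A T R] [A T R, X T S]"
proof -
  assume h: "X = A \<or> X = B" "1 \<le> R" "R < S" "S < T" "T \<le> n"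
  have a2: "peq n [A T R, A T S] [A S R, A T R]" by (rule peq.base, rule defrel.tri2) (use h in auto)
  have b: "peq n [A T R, B T S] [B S R, A T R]" by (rule peq.base, rule defrel.mix3) (use h in auto)
  show ?thesis using h a2 b peq.sym by blast
qed

lemma R3: "X = A \<or> X = B \<Longrightarrow> 1 \<le> R \<Longrightarrow> R < S \<Longrightarrow> S < T \<Longrightarrow> T \<le> n \<Longrightarrow>
   peq n [A T S, X S R] [X T R, A T S]"
proof -
  assume h: "X = A \<or> X = B" "1 \<le> R" "R < S" "S < T" "T \<le> n"
  have a1: "peq n [A T S, A S R] [A T R, A T S]" by (rule peq.base, rule defrel.tri1) (use h in auto)
  have b: "peq n [A T S, B S R] [B T R, A T S]" by (rule peq.base, rule defrel.mix1) (use h in auto)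
  show ?thesis using h a1 b by blast
qed

lemma R4: "X = A \<or> X = B \<Longrightarrow> 1 \<le> S \<Longrightarrow> S < T \<Longrightarrow> T \<le> n \<Longrightarrow>
   peq n [X T S, A T S] [A T S, X T S]"
proof -
  assume h: "X = A \<or> X = B" "1 \<le> S" "S < T" "T \<le> n"
  have b: "peq n [A T S, B T S] [B T S, A T S]" by (rule peq.base, rule defrel.ab_same) (use h in \<open>auto simp: valid_idx_def\<close>)
  show ?thesis using h b peq.sym peq.refl by blast
qed

lemma L3: assumes "j \<le> k" shows "X = A \<or> X = B \<Longrightarrow> 1 \<le> j \<Longrightarrow> k < T \<Longrightarrow> T \<le> n \<Longrightarrow>
   peq n (X T k # D k j) (D k j @ [X T j])"
using assms proof (induction k rule: dec_induct)
  case base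
  then show ?case by (simp add: D_same peq.refl)
next
  case (step k)
  have "peq n (X T (Suc k) # D (Suc k) j) (X T (Suc k) # A (Suc k) k # D k j)"
    using step by (simp add: D_Suc peq.refl)
  also have "peq n \<dots> (A (Suc k) k # X T k # D k j)"
    using peq_c[OF R1[of X k "Suc k" T n], of "[]" "D k j"] step by simp
  also have "peq n \<dots> (A (Suc k) k # D k j @ [X T j])"
    using peq_c[OF step.IH, of "[A (Suc k) k]" "[]"] step by simp
  finally show ?case using step by (simp add: D_Suc)
qed

lemma L6: assumes "j \<le> k" shows "X = A \<or> X = B \<Longrightarrow> 1 \<le> r \<Longrightarrow> r < j \<Longrightarrow> k \<le> n \<Longrightarrow>
   peq n (D k j @ [X j r]) (X k r # D k j)"
using assms proof (induction k rule: dec_induct)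
  case base
  then show ?case by (simp add: D_same peq.refl)
next
  case (step k)
  have "peq n (D (Suc k) j @ [X j r]) (A (Suc k) k # D k j @ [X j r])"
    using step by (simp add: D_Suc peq.refl)
  also have "peq n \<dots> (A (Suc k) k # X k r # D k j)"
    using peq_c[OF step.IH, of "[A (Suc k) k]" "[]"] step by simp
  also have "peq n \<dots> (X (Suc k) r # A (Suc k) k # D k j)"
    using peq_c[OF R3[of X r k "Suc k" n], of "[]" "D k j"] step by simp
  finally show ?case using step by (simp add: D_Suc)
qed

lemma L2: assumes "Suc j \<le> k" shows "1 \<le> j \<Longrightarrow> k \<le> n \<Longrightarrow>
   peq n (D k j) (A k j # D k (Suc j))"
using assms proof (induction k rule: dec_induct)
  case base
  then show ?case by (simp add: D_same D_Suc peq.refl)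
next
  case (step k)
  have "peq n (D (Suc k) j) (A (Suc k) k # D k j)"
    using step by (simp add: D_Suc peq.refl)
  also have "peq n \<dots> (A (Suc k) k # A k j # D k (Suc j))"
    using peq_c[OF step.IH, of "[A (Suc k) k]" "[]"] step by simp
  also have "peq n \<dots> (A (Suc k) j # A (Suc k) k # D k (Suc j))"
    using peq_c[OF R3[of A j k "Suc k" n], of "[]" "D k (Suc j)"] step by simp
  finally show ?case using step by (simp add: D_Suc)
qed

lemma L4: "1 \<le> j \<Longrightarrow> j + Suc d = k \<Longrightarrow> k \<le> n \<Longrightarrow>
   peq n (D k j) (D (k - 1) j @ [A k j])"
proof (induction d arbitrary: j)
  case 0
  then have "k = Suc j" by simp
  then show ?case by (simp add: D_same D_Suc peq.refl)
next
  case (Suc d)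
  have "peq n (D k j) (D k (Suc j) @ [A (Suc j) j])"
    using Suc by (simp add: D_low peq.refl)
  also have "peq n \<dots> (D (k - 1) (Suc j) @ [A k (Suc j), A (Suc j) j])"
    using peq_c[OF Suc.IH[of "Suc j"], of "[]" "[A (Suc j) j]"] Suc by simp
  also have "peq n \<dots> (D (k - 1) (Suc j) @ [A (Suc j) j, A k j])"
    using peq_c[OF R1[of A j "Suc j" k n], of "D (k - 1) (Suc j)" "[]"] Suc by simp
  finally show ?case using Suc D_low[of j "k - 1"] by simp
qed

lemma C1: assumes "j \<le> k" shows "X = A \<or> X = B \<Longrightarrow> 1 \<le> s \<Longrightarrow> s < t \<Longrightarrow> t < j \<Longrightarrow> k \<le> n \<Longrightarrow>
   peq n (X t s # D k j) (D k j @ [X t s])"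
using assms proof (induction k rule: dec_induct)
  case base
  then show ?case by (simp add: D_same peq.refl)
next
  case (step k)
  have "peq n (X t s # D (Suc k) j) (X t s # A (Suc k) k # D k j)"
    using step by (simp add: D_Suc peq.refl)
  also have "peq n \<dots> (A (Suc k) k # X t s # D k j)"
    using peq_c[OF comm[of X n t s "Suc k" k], of "[]" "D k j"] step
    by (simp add: valid_idx_def disj2 disj1)
  also have "peq n \<dots> (A (Suc k) k # D k j @ [X t s])"
    using peq_c[OF step.IH, of "[A (Suc k) k]" "[]"] step by simp
  finally show ?case using step by (simp add: D_Suc)
qed

lemma C2: assumes "j \<le> k" shows "X = A \<or> X = B \<Longrightarrow> 1 \<le> s \<Longrightarrow> s < t \<Longrightarrow> t \<le> n \<Longrightarrow> 1 \<le> j \<Longrightarrow> k < s \<Longrightarrow>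
   peq n (X t s # D k j) (D k j @ [X t s])"
using assms proof (induction k rule: dec_induct)
  case base
  then show ?case by (simp add: D_same peq.refl)
next
  case (step k)
  have "peq n (X t s # D (Suc k) j) (X t s # A (Suc k) k # D k j)"
    using step by (simp add: D_Suc peq.refl)
  also have "peq n \<dots> (A (Suc k) k # X t s # D k j)"
    using peq_c[OF comm[of X n t s "Suc k" k], of "[]" "D k j"] step
    by (simp add: valid_idx_def disj2 disj1)
  also have "peq n \<dots> (A (Suc k) k # D k j @ [X t s])"
    using peq_c[OF step.IH, of "[A (Suc k) k]" "[]"] step by simp
  finally show ?case using step by (simp add: D_Suc)
qed

lemma K: "X = A \<or> X = B \<Longrightarrow> 1 \<le> s \<Longrightarrow> s < t \<Longrightarrow> t < n \<Longrightarrow>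
   peq n (X t s # D (Suc t) s) (D (Suc t) s @ [X (Suc t) (Suc s)])"
proof -
  assume h: "X = A \<or> X = B" "1 \<le> s" "s < t" "t < n"
  have e: "D (Suc t) (Suc s) = A (Suc t) t # D t (Suc s)" using h by (simp add: D_Suc)
  have "peq n (X t s # D (Suc t) s) (X t s # A (Suc t) s # D (Suc t) (Suc s))"
    using peq_c[OF L2[of s "Suc t" n], of "[X t s]" "[]"] h by simp
  also have "peq n \<dots> (A (Suc t) s # X (Suc t) t # A (Suc t) t # D t (Suc s))"
    using peq_c[OF R2[of X s t "Suc t" n], of "[]" "D (Suc t) (Suc s)"] h e by simp
  also have "peq n \<dots> (A (Suc t) s # A (Suc t) t # X (Suc t) t # D t (Suc s))"
    using peq_c[OF R4[of X t "Suc t" n], of "[A (Suc t) s]" "D t (Suc s)"] h by simp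
  also have "peq n \<dots> (A (Suc t) s # A (Suc t) t # D t (Suc s) @ [X (Suc t) (Suc s)])"
    using peq_c[OF L3[of "Suc s" t X "Suc t" n], of "[A (Suc t) s, A (Suc t) t]" "[]"] h by simp
  also have "peq n \<dots> (D (Suc t) s @ [X (Suc t) (Suc s)])"
    using peq_c[OF peq.sym[OF L2[of s "Suc t" n]], of "[]" "[X (Suc t) (Suc s)]"] h e by simp
  finally show ?thesis .
qed

lemma P1: "X = A \<or> X = B \<Longrightarrow> 1 \<le> s \<Longrightarrow> s < t \<Longrightarrow> t < n \<Longrightarrow>
   peq n (X t s # D n 1) (D n 1 @ [X (Suc t) (Suc s)])"
proof -
  assume h: "X = A \<or> X = B" "1 \<le> s" "s < t" "t < n"
  have e: "D n 1 = D n (Suc t) @ D (Suc t) s @ D s 1"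
    using h D_split[of 1 s "Suc t"] D_split[of 1 "Suc t" n] by simp
  have "peq n (X t s # D n 1) (D n (Suc t) @ (X t s # D (Suc t) s) @ D s 1)"
    using peq_c[OF C1[of "Suc t" n X s t n], of "[]" "D (Suc t) s @ D s 1"] h e by simp
  also have "peq n \<dots> (D n (Suc t) @ (D (Suc t) s @ [X (Suc t) (Suc s)]) @ D s 1)"
    using peq_c[OF K[of X s t n], of "D n (Suc t)" "D s 1"] h by simp
  also have "peq n \<dots> (D n 1 @ [X (Suc t) (Suc s)])"
    using peq_c[OF C2[of 1 s X "Suc s" "Suc t" n], of "D n (Suc t) @ D (Suc t) s" "[]"] h e by simp
  finally show ?thesis .
qed

lemma P2: "X = A \<or> X = B \<Longrightarrow> 1 \<le> s \<Longrightarrow> s < n \<Longrightarrow>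
   peq n (X n s # D n 1) (D n 1 @ [X (Suc s) 1])"
proof -
  assume h: "X = A \<or> X = B" "1 \<le> s" "s < n"
  have e: "D n 1 = D n (Suc s) @ D (Suc s) 1"
    using h D_split[of 1 "Suc s" n] by simp
  have l4: "peq n (D (Suc s) 1) (D s 1 @ [A (Suc s) 1])"
    using L4[of 1 "s - 1" "Suc s" n] h by simp
  have "peq n (D n 1 @ [X (Suc s) 1]) (D n (Suc s) @ D s 1 @ [A (Suc s) 1, X (Suc s) 1])"
    using peq_c[OF l4, of "D n (Suc s)" "[X (Suc s) 1]"] e by simp
  also have "peq n \<dots> (D n (Suc s) @ D s 1 @ [X (Suc s) 1, A (Suc s) 1])"
    using peq_c[OF peq.sym[OF R4[of X 1 "Suc s" n]], of "D n (Suc s) @ D s 1" "[]"] h by simp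
  also have "peq n \<dots> (D n (Suc s) @ (X (Suc s) s # D s 1) @ [A (Suc s) 1])"
    using peq_c[OF peq.sym[OF L3[of 1 s X "Suc s" n]], of "D n (Suc s)" "[A (Suc s) 1]"] h by simp
  also have "peq n \<dots> (D n (Suc s) @ [X (Suc s) s] @ D (Suc s) 1)"
    using peq_c[OF peq.sym[OF l4], of "D n (Suc s) @ [X (Suc s) s]" "[]"] by simp
  also have "peq n \<dots> (X n s # D n 1)"
    using peq_c[OF L6[of "Suc s" n X s n], of "[]" "D (Suc s) 1"] h e by simp
  finally show ?thesis by (rule peq.sym)
qed

theorem proposition4p2:
  fixes n :: nat
  assumes "n \<ge> 2"
  shows "(\<forall>s t. 1 \<le> s \<and> s < t \<and> t < n \<longrightarrow>
            peq n (A t s # delta n) (delta n @ [A (t + 1) (s + 1)]) \<and>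
            peq n (B t s # delta n) (delta n @ [B (t + 1) (s + 1)]))
       \<and> (\<forall>s. 1 \<le> s \<and> s < n \<longrightarrow>
            peq n (A n s # delta n) (delta n @ [A (s + 1) 1]) \<and>
            peq n (B n s # delta n) (delta n @ [B (s + 1) 1]))"
  using P1[of A] P1[of B] P2[of A] P2[of B] by (simp add: delta_D)

end
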